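(* Let $(\mathcal M,g)$ be an $n$-dimensional Lorentzian manifold ($n\ge3$) with a concircularly semi-symmetric metric connection $\overset{1}{\nabla}$ whose associated vector field $P$ satisfies $g(P,P)=-1$. Then $(\mathcal M,g,\overset{1}{\nabla})$ is an Einstein type manifold of the fourth kind (i.e. $\overset{4}{Ric}=\frac{\overset{4}{r}}{n}g$) if and only if it is a perfect fluid space-time whose Ricci tensor is $\overset{g}{Ric}=(n-1)(2g+\pi\otimes\pi)$; in that case the scalar curvature is constant, $\overset{g}{r}=(n-1)(2n-1)$.
   Context: Let $(\mathcal M,g)$ be an $n$-dimensional pseudo-Riemannian manifold with Levi-Civita connection $\overset{g}{\nabla}$, let $P$ be a vector field and $\pi=g(\cdot,P)$ its associated 1-form. The semi-symmetric metric connection generated by $\pi$ is $\overset{1}{\nabla}_XY=\overset{g}{\nabla}_XY+\pi(Y)X-g(X,Y)P$; it satisfies $\overset{1}{\nabla}g=0$ and has torsion $\overset{1}{T}(X,Y)=\pi(Y)X-\pi(X)Y$. It is called a concircularly semi-symmetric metric connection if there is a smooth function $\omega$ on $\mathcal M$ such that $(\overset{g}{\nabla}_X\pi)(Y)-\pi(X)\pi(Y)=\omega\, g(X,Y)$ for all vector fields $X,Y$. Curvature tensors: $\overset{1}{R}(X,Y)Z=\overset{1}{\nabla}_X\overset{1}{\nabla}_YZ-\overset{1}{\nabla}_Y\overset{1}{\nabla}_XZ-\overset{1}{\nabla}_{[X,Y]}Z$ and $\overset{4}{R}(X,Y)Z=\overset{1}{R}(X,Y)Z+(\overset{1}{\nabla}_Y\overset{1}{T})(X,Z)-\overset{1}{T}(\overset{1}{T}(X,Y),Z)$.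 The Ricci tensors are $\overset{\theta}{Ric}(Y,Z)=\mathrm{tr}(X\mapsto \overset{\theta}{R}(X,Y)Z)$, and $\overset{g}{Ric}$ is the Ricci tensor of $\overset{g}{\nabla}$ defined the same way; $\overset{\theta}{r}$ and $\overset{g}{r}$ are their $g$-traces. A Lorentzian manifold is a perfect fluid space-time if $\overset{g}{Ric}=ag+b\,\pi\otimes\pi$ for scalar functions $a,b$. *)

theory Defs
  imports "HOL-Analysis.Analysis"
begin

text \<open>The manifold is represented by an open
chart domain U in real^'n (dimension n = CARD('n)); tensors are given by their
components in the coordinate frame (partial derivatives along the coordinate axes).
All conditions in the theorem are pointwise/local, so this is a chart-wise rendering.\<close>

definition pd :: "'n::finite \<Rightarrow> (real^'n \<Rightarrow> real) \<Rightarrow> real^'n \<Rightarrow> real" where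
  "pd i f x = frechet_derivative f (at x) (axis i 1)"

fun iter_pd :: "'n::finite list \<Rightarrow> (real^'n \<Rightarrow> real) \<Rightarrow> real^'n \<Rightarrow> real" where
  "iter_pd [] f = f"
| "iter_pd (i # is) f = pd i (iter_pd is f)"

definition smooth_on :: "(real^'n::finite) set \<Rightarrow> (real^'n \<Rightarrow> real) \<Rightarrow> bool" where
  "smooth_on U f \<longleftrightarrow> (\<forall>is. iter_pd is f differentiable_on U)"

text \<open>Lorentzian signature (-,+,...,+) of a symmetric bilinear form (Sylvester).\<close>
definition lorentzian_matrix :: "real^('n::finite)^'n \<Rightarrow> bool" where
  "lorentzian_matrix G \<longleftrightarrow> transpose G = G \<and>
     (\<exists>(E::real^'n^'n) i0. invertible E \<and>
        transpose E ** G ** E = (\<chi> i j. if i = j then (if i = i0 then -1 else 1) else 0))"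

definition lorentzian_metric :: "(real^'n::finite) set \<Rightarrow> (real^'n \<Rightarrow> real^'n^'n) \<Rightarrow> bool" where
  "lorentzian_metric U g \<longleftrightarrow> open U \<and>
     (\<forall>i j. smooth_on U (\<lambda>x. g x $ i $ j)) \<and> (\<forall>x\<in>U. lorentzian_matrix (g x))"

definition ginv :: "(real^'n \<Rightarrow> real^'n^'n) \<Rightarrow> real^'n \<Rightarrow> real^'n^'n" where
  "ginv g x = matrix_inv (g x)"

text \<open>Christoffel symbols of the Levi-Civita connection:
  christoffel g k i j x = Gamma^k_{ij}, i.e. nabla_{d_i} d_j = sum_k Gamma^k_{ij} d_k.\<close>
definition christoffel :: "(real^'n::finite \<Rightarrow> real^'n^'n) \<Rightarrow> 'n \<Rightarrow> 'n \<Rightarrow> 'n \<Rightarrow> real^'n \<Rightarrow> real" where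
  "christoffel g k i j x = (1/2) * (\<Sum>l\<in>UNIV. ginv g x $ k $ l *
      (pd i (\<lambda>y. g y $ j $ l) x + pd j (\<lambda>y. g y $ i $ l) x - pd l (\<lambda>y. g y $ i $ j) x))"

definition pi_form :: "(real^'n::finite \<Rightarrow> real^'n^'n) \<Rightarrow> (real^'n \<Rightarrow> real^'n) \<Rightarrow> 'n \<Rightarrow> real^'n \<Rightarrow> real" where
  "pi_form g P j x = (\<Sum>k\<in>UNIV. g x $ j $ k * P x $ k)"

definition kdelta :: "'n \<Rightarrow> 'n \<Rightarrow> real" where
  "kdelta i j = (if i = j then 1 else 0)"

text \<open>Semi-symmetric metric connection nabla^1: coefficients A^k_{ij} with
  nabla1_X Y = nabla^g_X Y + pi(Y) X - g(X,Y) P.\<close>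
definition conn1 :: "(real^'n::finite \<Rightarrow> real^'n^'n) \<Rightarrow> (real^'n \<Rightarrow> real^'n) \<Rightarrow> 'n \<Rightarrow> 'n \<Rightarrow> 'n \<Rightarrow> real^'n \<Rightarrow> real" where
  "conn1 g P k i j x = christoffel g k i j x + pi_form g P j x * kdelta k i - g x $ i $ j * P x $ k"

text \<open>Curvature of a connection with coefficients A (A k i j = A^k_{ij}):
  curv A a b c m x = m-th component of R(d_a,d_b) d_c.\<close>
definition curv :: "('n::finite \<Rightarrow> 'n \<Rightarrow> 'n \<Rightarrow> real^'n \<Rightarrow> real) \<Rightarrow> 'n \<Rightarrow> 'n \<Rightarrow> 'n \<Rightarrow> 'n \<Rightarrow> real^'n \<Rightarrow> real" where
  "curv A a b c m x =
     pd a (A m b c) x + (\<Sum>p\<in>UNIV. A p b c x * A m a p x)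
   - pd b (A m a c) x - (\<Sum>p\<in>UNIV. A p a c x * A m b p x)"

text \<open>Torsion of nabla^1: T(X,Y) = pi(Y) X - pi(X) Y; torsion1 g P m a b x = T^m_{ab}.\<close>
definition torsion1 :: "(real^'n::finite \<Rightarrow> real^'n^'n) \<Rightarrow> (real^'n \<Rightarrow> real^'n) \<Rightarrow> 'n \<Rightarrow> 'n \<Rightarrow> 'n \<Rightarrow> real^'n \<Rightarrow> real" where
  "torsion1 g P m a b x = pi_form g P b x * kdelta m a - pi_form g P a x * kdelta m b"

text \<open>(nabla^1_{d_b} T)(d_a, d_c), m-th component.\<close>
definition nabla1_torsion :: "(real^'n::finite \<Rightarrow> real^'n^'n) \<Rightarrow> (real^'n \<Rightarrow> real^'n) \<Rightarrow> 'n \<Rightarrow> 'n \<Rightarrow> 'n \<Rightarrow> 'n \<Rightarrow> real^'n \<Rightarrow> real" where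
  "nabla1_torsion g P b m a c x =
     pd b (torsion1 g P m a c) x
   + (\<Sum>p\<in>UNIV. conn1 g P m b p x * torsion1 g P p a c x)
   - (\<Sum>p\<in>UNIV. conn1 g P p b a x * torsion1 g P m p c x)
   - (\<Sum>p\<in>UNIV. conn1 g P p b c x * torsion1 g P m a p x)"

definition curv1 where "curv1 g P a b c m x = curv (conn1 g P) a b c m x"

definition curv4 where
  "curv4 g P a b c m x = curv1 g P a b c m x + nabla1_torsion g P b m a c x
     - (\<Sum>p\<in>UNIV. torsion1 g P p a b x * torsion1 g P m p c x)"

definition curvg where "curvg g a b c m x = curv (christoffel g) a b c m x"

definition ricci_of :: "('n::finite \<Rightarrow> 'n \<Rightarrow> 'n \<Rightarrow> 'n \<Rightarrow> real^'n \<Rightarrow> real) \<Rightarrow> 'n \<Rightarrow> 'n \<Rightarrow> real^'n \<Rightarrow> real" where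
  "ricci_of R b c x = (\<Sum>a\<in>UNIV. R a b c a x)"

definition scalar_of :: "(real^'n::finite \<Rightarrow> real^'n^'n) \<Rightarrow> ('n \<Rightarrow> 'n \<Rightarrow> real^'n \<Rightarrow> real) \<Rightarrow> real^'n \<Rightarrow> real" where
  "scalar_of g Ric x = (\<Sum>b\<in>UNIV. \<Sum>c\<in>UNIV. ginv g x $ b $ c * Ric b c x)"

definition Ric4 where "Ric4 g P = ricci_of (curv4 g P)"
definition r4 where "r4 g P = scalar_of g (Ric4 g P)"
definition Ricg where "Ricg g = ricci_of (curvg g)"
definition rg where "rg g = scalar_of g (Ricg g)"

definition concircular :: "(real^'n::finite) set \<Rightarrow> (real^'n \<Rightarrow> real^'n^'n) \<Rightarrow> (real^'n \<Rightarrow> real^'n) \<Rightarrow> bool" where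
  "concircular U g P \<longleftrightarrow> (\<exists>\<omega>. smooth_on U \<omega> \<and> (\<forall>x\<in>U. \<forall>a b.
      pd a (pi_form g P b) x - (\<Sum>p\<in>UNIV. christoffel g p a b x * pi_form g P p x)
      - pi_form g P a x * pi_form g P b x = \<omega> x * g x $ a $ b))"

definition einstein_type_4 :: "(real^'n::finite) set \<Rightarrow> (real^'n \<Rightarrow> real^'n^'n) \<Rightarrow> (real^'n \<Rightarrow> real^'n) \<Rightarrow> bool" where
  "einstein_type_4 U g P \<longleftrightarrow>
     (\<forall>x\<in>U. \<forall>a b. Ric4 g P a b x = r4 g P x / real CARD('n) * g x $ a $ b)"

definition perfect_fluid :: "(real^'n::finite) set \<Rightarrow> (real^'n \<Rightarrow> real^'n^'n) \<Rightarrow> (real^'n \<Rightarrow> real^'n) \<Rightarrow> bool" where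
  "perfect_fluid U g P \<longleftrightarrow> (\<exists>\<alpha> \<beta>. \<forall>x\<in>U. \<forall>a b.
      Ricg g a b x = \<alpha> x * g x $ a $ b + \<beta> x * pi_form g P a x * pi_form g P b x)"

end

theory Submission
  imports Defs
begin
lemma pd_has: "(f has_derivative f') (at x) \<Longrightarrow> pd i f x = f' (axis i 1)"
  unfolding pd_def using frechet_derivative_at by metis

lemma pd_works: "f differentiable at x \<Longrightarrow> (f has_derivative (\<lambda>h. frechet_derivative f (at x) h)) (at x)"
  using frechet_derivative_works by (metis eta_contract_eq)

lemma pd_cong_open:
  assumes "open U" "x \<in> U" "\<And>y. y \<in> U \<Longrightarrow> f y = h y"
  shows "pd i f x = pd i h x"
proof -
  have "\<And>D. (f has_derivative D) (at x) \<longleftrightarrow> (h has_derivative D) (at x)"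
    using has_derivative_transform_within_open[OF _ assms(1,2)] assms(3) by (metis)
  then show ?thesis unfolding pd_def frechet_derivative_def by simp
qed

lemma diff_cong_open:
  assumes "open U" "x \<in> U" "\<And>y. y \<in> U \<Longrightarrow> f y = h y" "h differentiable at x"
  shows "f differentiable at x"
  using assms has_derivative_transform_within_open[OF _ assms(1,2), of h _ _ f]
  unfolding differentiable_def by metis

lemma pd_add: "f differentiable at x \<Longrightarrow> h differentiable at x \<Longrightarrow>
   pd i (\<lambda>y. f y + h y) x = pd i f x + pd i h x"
  using pd_has[OF has_derivative_add[OF pd_works pd_works]] by (simp add: pd_def)

lemma pd_diff: "f differentiable at x \<Longrightarrow> h differentiable at x \<Longrightarrow>
   pd i (\<lambda>y. f y - h y) x = pd i f x - pd i h x"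
  using pd_has[OF has_derivative_diff[OF pd_works pd_works]] by (simp add: pd_def)

lemma pd_mult: "f differentiable at x \<Longrightarrow> h differentiable at x \<Longrightarrow>
   pd i (\<lambda>y. f y * h y) x = pd i f x * h x + f x * pd i h x"
  using pd_has[OF has_derivative_mult[OF pd_works pd_works], of f x h i] by (simp add: pd_def)

lemma pd_const: "pd i (\<lambda>y. c) x = 0"
  by (rule pd_has) (auto intro!: derivative_eq_intros)

lemma pd_sum: "finite S \<Longrightarrow> (\<And>k. k \<in> S \<Longrightarrow> f k differentiable at x) \<Longrightarrow>
   pd i (\<lambda>y. \<Sum>k\<in>S. f k y) x = (\<Sum>k\<in>S. pd i (f k) x)"
proof -
  assume "finite S" "\<And>k. k \<in> S \<Longrightarrow> f k differentiable at x"
  then have "((\<lambda>y. \<Sum>k\<in>S. f k y) has_derivative (\<lambda>h. \<Sum>k\<in>S. frechet_derivative (f k) (at x) h)) (at x)"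
    by (intro has_derivative_sum pd_works) auto
  from pd_has[OF this] show ?thesis by (simp add: pd_def)
qed

lemma differentiable_prod':
  fixes f :: "'i \<Rightarrow> 'a::real_normed_vector \<Rightarrow> 'b::real_normed_field"
  shows "(\<And>i. i \<in> I \<Longrightarrow> f i differentiable at x) \<Longrightarrow> (\<lambda>x. \<Prod>i\<in>I. f i x) differentiable at x"
proof -
  assume "\<And>i. i \<in> I \<Longrightarrow> f i differentiable at x"
  then have "\<And>i. i \<in> I \<Longrightarrow> (f i has_derivative frechet_derivative (f i) (at x)) (at x)"
    using frechet_derivative_works by blast
  then have "((\<lambda>x. \<Prod>i\<in>I. f i x) has_derivative (\<lambda>y. \<Sum>i\<in>I. frechet_derivative (f i) (at x) y * (\<Prod>j\<in>I - {i}. f j x))) (at x)"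
    by (rule has_derivative_prod)
  then show ?thesis by (auto simp: differentiable_def)
qed

lemma line_deriv:
  fixes f :: "real^'n::finite \<Rightarrow> real"
  assumes "f differentiable at (x + t *\<^sub>R axis i 1 + w)"
  shows "((\<lambda>s. f (x + s *\<^sub>R axis i 1 + w)) has_real_derivative pd i f (x + t *\<^sub>R axis i 1 + w)) (at t)"
proof -
  let ?y = "x + t *\<^sub>R axis i 1 + w"
  let ?Df = "frechet_derivative f (at ?y)"
  have fD: "(f has_derivative ?Df) (at ?y)" using assms frechet_derivative_works by blast
  have gam: "((\<lambda>s. x + s *\<^sub>R axis i 1 + w) has_derivative (\<lambda>s. s *\<^sub>R axis i 1)) (at t)"
    by (auto intro!: derivative_eq_intros)
  have c: "((\<lambda>s. f (x + s *\<^sub>R axis i 1 + w)) has_derivative (\<lambda>s. ?Df (s *\<^sub>R axis i 1))) (at t)"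
    using has_derivative_compose[OF gam fD] by simp
  have lin: "linear ?Df" using fD has_derivative_linear by blast
  have "(\<lambda>s. ?Df (s *\<^sub>R axis i 1)) = (*) (?Df (axis i 1))"
    by (rule ext) (simp add: linear_scale[OF lin])
  with c show ?thesis unfolding has_field_derivative_def pd_def by simp
qed

lemma schwarz_lim:
  fixes f :: "real^'n::finite \<Rightarrow> real"
  assumes U: "open U" "x \<in> U" and fd: "\<And>y. y \<in> U \<Longrightarrow> f differentiable at y"
    and gd: "(pd i f has_derivative D) (at x)"
  shows "((\<lambda>h. (f (x + h *\<^sub>R axis i 1 + h *\<^sub>R axis j 1) - f (x + h *\<^sub>R axis i 1)
              - f (x + h *\<^sub>R axis j 1) + f x) / h\<^sup>2) \<longlongrightarrow> D (axis j 1)) (at_right 0)"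
proof -
  define u where "u = (axis i 1 :: real^'n)"
  define v where "v = (axis j 1 :: real^'n)"
  have nu: "norm u = 1" "norm v = 1" by (simp_all add: u_def v_def norm_axis_1)
  have lin: "linear D" using gd has_derivative_linear by blast
  obtain r where r: "r > 0" "ball x r \<subseteq> U" using U open_contains_ball by blast
  show ?thesis unfolding u_def[symmetric] v_def[symmetric] tendsto_iff
  proof (intro allI impI)
    fix e :: real assume e: "e > 0"
    obtain d where d: "d > 0" and dd: "\<And>y. norm (y - x) < d \<Longrightarrow>
        norm (pd i f y - pd i f x - D (y - x)) \<le> (e/4) * norm (y - x)"
    proof -
      have "e/4 > 0" using e by simp
      then show ?thesis using gd[unfolded has_derivative_at_alt] that by blast
    qed
    define b where "b = min d r / 3"
    have b: "b > 0" using d r by (simp add: b_def)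
    show "\<forall>\<^sub>F h in at_right 0. dist ((f (x + h *\<^sub>R u + h *\<^sub>R v) - f (x + h *\<^sub>R u)
              - f (x + h *\<^sub>R v) + f x) / h\<^sup>2) (D v) < e"
      unfolding eventually_at_right_field
    proof (intro exI[of _ b] conjI allI impI b)
      fix h :: real assume h: "0 < h" "h < b"
      define \<phi> where "\<phi> t = f (x + t *\<^sub>R u + h *\<^sub>R v) - f (x + t *\<^sub>R u + 0)" for t
      have inU: "x + t *\<^sub>R u + w \<in> U" if "0 \<le> t" "t \<le> h" "norm w \<le> h" for t w
      proof -
        have "norm (t *\<^sub>R u + w) \<le> t + h" using norm_triangle_ineq[of "t *\<^sub>R u" w] that nu by simp
        then have "dist (x + t *\<^sub>R u + w) x < r" using h that unfolding b_def dist_norm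
          by (simp add: add.assoc)
        then have "dist x (x + t *\<^sub>R u + w) < r" by (simp add: dist_commute)
        then show ?thesis using r by auto
      qed
      have der: "(\<phi> has_real_derivative (pd i f (x + t *\<^sub>R u + h *\<^sub>R v) - pd i f (x + t *\<^sub>R u + 0))) (at t)"
        if "0 \<le> t" "t \<le> h" for t
        unfolding \<phi>_def u_def
        by (intro DERIV_diff line_deriv fd inU[unfolded u_def] that) (use h nu in auto)
      obtain z where z: "0 < z" "z < h" "\<phi> h - \<phi> 0 = (h - 0) * (pd i f (x + z *\<^sub>R u + h *\<^sub>R v) - pd i f (x + z *\<^sub>R u + 0))"
        using MVT2[OF h(1) der] by blast
      define w1 where "w1 = z *\<^sub>R u + h *\<^sub>R v"
      define w2 where "w2 = z *\<^sub>R u"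
      have nw1: "norm w1 \<le> 2 * h" unfolding w1_def using norm_triangle_ineq[of "z *\<^sub>R u" "h *\<^sub>R v"] nu z by simp
      have nw2: "norm w2 \<le> h" unfolding w2_def using nu z by simp
      have e1: "norm (pd i f (x + w1) - pd i f x - D w1) \<le> (e/4) * (2*h)"
      proof -
        have "norm (pd i f (x + w1) - pd i f x - D w1) \<le> (e/4) * norm w1"
          using dd[of "x + w1"] nw1 h unfolding b_def by simp
        also have "\<dots> \<le> (e/4) * (2*h)" using nw1 e by simp
        finally show ?thesis .
      qed
      have e2: "norm (pd i f (x + w2) - pd i f x - D w2) \<le> (e/4) * h"
      proof -
        have "norm (pd i f (x + w2) - pd i f x - D w2) \<le> (e/4) * norm w2"
          using dd[of "x + w2"] nw2 h d unfolding b_def by simp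
        also have "\<dots> \<le> (e/4) * h" using nw2 e by simp
        finally show ?thesis .
      qed
      have Dw: "D w1 - D w2 = h * D v"
        unfolding w1_def w2_def using lin by (simp add: linear_add linear_scale)
      have key: "\<bar>(pd i f (x + w1) - pd i f (x + w2)) - h * D v\<bar> \<le> 3/4 * e * h"
      proof -
        have sp: "(pd i f (x + w1) - pd i f (x + w2)) - h * D v
             = (pd i f (x + w1) - pd i f x - D w1) - (pd i f (x + w2) - pd i f x - D w2)"
          using Dw by (simp add: algebra_simps)
        have "\<bar>(pd i f (x + w1) - pd i f (x + w2)) - h * D v\<bar>
             \<le> \<bar>pd i f (x + w1) - pd i f x - D w1\<bar> + \<bar>pd i f (x + w2) - pd i f x - D w2\<bar>"
          unfolding sp by (rule abs_triangle_ineq4)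
        then show ?thesis using e1 e2 by simp
      qed
      have phi: "\<phi> h - \<phi> 0 = f (x + h *\<^sub>R u + h *\<^sub>R v) - f (x + h *\<^sub>R u) - f (x + h *\<^sub>R v) + f x"
        unfolding \<phi>_def by simp
      have q: "(f (x + h *\<^sub>R u + h *\<^sub>R v) - f (x + h *\<^sub>R u) - f (x + h *\<^sub>R v) + f x) / h\<^sup>2 - D v
             = ((pd i f (x + w1) - pd i f (x + w2)) - h * D v) / h"
      proof -
        have zz: "f (x + h *\<^sub>R u + h *\<^sub>R v) - f (x + h *\<^sub>R u) - f (x + h *\<^sub>R v) + f x
             = h * (pd i f (x + w1) - pd i f (x + w2))"
          using z(3) unfolding phi w1_def w2_def by (simp add: add.assoc)
        show ?thesis unfolding zz using h by (simp add: power2_eq_square field_simps)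
      qed
      have "dist ((f (x + h *\<^sub>R u + h *\<^sub>R v) - f (x + h *\<^sub>R u) - f (x + h *\<^sub>R v) + f x) / h\<^sup>2) (D v)
           = \<bar>(pd i f (x + w1) - pd i f (x + w2)) - h * D v\<bar> / h"
        unfolding dist_real_def q using h by simp
      also have "\<dots> \<le> 3/4 * e" using key h by (simp add: divide_le_eq)
      also have "\<dots> < e" using e by simp
      finally show "dist ((f (x + h *\<^sub>R u + h *\<^sub>R v) - f (x + h *\<^sub>R u) - f (x + h *\<^sub>R v) + f x) / h\<^sup>2) (D v) < e" .
    qed
  qed
qed

lemma schwarz:
  fixes f :: "real^'n::finite \<Rightarrow> real"
  assumes U: "open U" "x \<in> U" and fd: "\<And>y. y \<in> U \<Longrightarrow> f differentiable at y"
    and gi: "pd i f differentiable at x" and gj: "pd j f differentiable at x"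
  shows "pd j (pd i f) x = pd i (pd j f) x"
proof -
  note l1 = schwarz_lim[OF U fd pd_works[OF gi], of j]
  note l2 = schwarz_lim[OF U fd pd_works[OF gj], of i]
  have eq: "(\<lambda>h. (f (x + h *\<^sub>R axis j 1 + h *\<^sub>R axis i 1) - f (x + h *\<^sub>R axis j 1)
              - f (x + h *\<^sub>R axis i 1) + f x) / h\<^sup>2) = (\<lambda>h. (f (x + h *\<^sub>R axis i 1 + h *\<^sub>R axis j 1) - f (x + h *\<^sub>R axis i 1)
              - f (x + h *\<^sub>R axis j 1) + f x) / h\<^sup>2)"
    by (rule ext) (simp add: add_ac)
  have "frechet_derivative (pd i f) (at x) (axis j 1) = frechet_derivative (pd j f) (at x) (axis i 1)"
    using tendsto_unique[OF trivial_limit_at_right_real l1 l2[unfolded eq]] .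
  then show ?thesis unfolding pd_def[of j "pd i f"] pd_def[of i "pd j f"] .
qed

lemma smooth_diff0:
  assumes "smooth_on U f" "open U" "x \<in> U"
  shows "f differentiable at x"
proof -
  have "iter_pd [] f differentiable_on U" using assms(1) unfolding smooth_on_def by blast
  then show ?thesis using assms(2,3) differentiable_on_eq_differentiable_at by auto
qed

lemma smooth_diff1:
  assumes "smooth_on U f" "open U" "x \<in> U"
  shows "pd i f differentiable at x"
proof -
  have "iter_pd [i] f differentiable_on U" using assms(1) unfolding smooth_on_def by blast
  then show ?thesis using assms(2,3) differentiable_on_eq_differentiable_at by auto
qed

lemma smooth_diff2:
  assumes "smooth_on U f" "open U" "x \<in> U"
  shows "pd i (pd j f) differentiable at x"
proof -
  have "iter_pd [i,j] f differentiable_on U" using assms(1) unfolding smooth_on_def by blast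
  then show ?thesis using assms(2,3) differentiable_on_eq_differentiable_at by auto
qed

lemma det_differentiable:
  fixes M :: "real^'n::finite \<Rightarrow> real^'m::finite^'m"
  assumes "\<And>r s. (\<lambda>y. M y $ r $ s) differentiable at x"
  shows "(\<lambda>y. det (M y)) differentiable at x"
proof -
  have pr: "(\<lambda>y. \<Prod>i\<in>UNIV. M y $ i $ p i) differentiable at x" for p :: "'m \<Rightarrow> 'm"
    by (rule differentiable_prod') (rule assms)
  show ?thesis unfolding det_def
    by (rule differentiable_sum) (auto simp: finite_permutations intro!: differentiable_mult pr)
qed

lemma lorentzian_invertible:
  assumes "lorentzian_matrix (G::real^'n::finite^'n)"
  shows "invertible G"
proof -
  obtain E :: "real^'n^'n" and i0 where E: "invertible E"
    and EG: "transpose E ** G ** E = (\<chi> i j. if i = j then (if i = i0 then -1 else 1) else 0)"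
    using assms unfolding lorentzian_matrix_def by blast
  define Dm :: "real^'n^'n" where "Dm = (\<chi> i j. if i = j then (if i = i0 then -1 else 1) else 0)"
  have "det Dm = (\<Prod>i\<in>UNIV. Dm $ i $ i)"
    by (rule det_diagonal) (simp add: Dm_def)
  also have "\<dots> \<noteq> 0" by (simp add: Dm_def)
  finally have "det Dm \<noteq> 0" .
  moreover have "det Dm = det (transpose E) * det G * det E"
    unfolding EG[unfolded Dm_def[symmetric], symmetric] by (simp add: det_mul)
  ultimately have "det G \<noteq> 0" by auto
  then show ?thesis by (simp add: invertible_det_nz)
qed

lemma matrix_inv_props:
  assumes "invertible (G::real^'n::finite^'n)"
  shows "G ** matrix_inv G = mat 1" "matrix_inv G ** G = mat 1"
  using assms unfolding invertible_def matrix_inv_def by (metis (mono_tags, lifting) someI_ex)+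

lemma matrix_inv_entry:
  assumes "invertible (G::real^'n::finite^'n)"
  shows "matrix_inv G $ i $ k = det (\<chi> r s. if s = i then axis k 1 $ r else G $ r $ s) / det G"
proof -
  have d: "det G \<noteq> 0" using assms invertible_det_nz by blast
  have "G *v (matrix_inv G *v axis k 1) = axis k 1"
    using matrix_inv_props(1)[OF assms] by (simp add: matrix_vector_mul_assoc)
  then have "matrix_inv G *v axis k 1 = (\<chi> k'. det(\<chi> r s. if s = k' then axis k 1 $ r else G $ r $ s) / det G)"
    using cramer[OF d] by blast
  then have "(matrix_inv G *v axis k 1) $ i = det (\<chi> r s. if s = i then axis k 1 $ r else G $ r $ s) / det G"
    by simp
  moreover have "(matrix_inv G *v axis k 1) $ i = matrix_inv G $ i $ k"
    by (simp add: matrix_vector_mult_def axis_def if_distrib sum.delta cong: if_cong)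
  ultimately show ?thesis by simp
qed

lemma kd1[simp]: fixes c :: "'a::finite" shows "(\<Sum>m\<in>UNIV. kdelta c m * f m) = (f c::real)"
proof -
  have "(\<Sum>m\<in>UNIV. kdelta c m * f m) = (\<Sum>m\<in>UNIV. if c = m then f m else (0::real))" by (rule sum.cong) (auto simp: kdelta_def)
  also have "\<dots> = f c" using sum.delta'[of UNIV c f] by simp
  finally show ?thesis .
qed
lemma kd2[simp]: fixes c :: "'a::finite" shows "(\<Sum>m\<in>UNIV. f m * kdelta c m) = (f c::real)"
proof -
  have "(\<Sum>m\<in>UNIV. f m * kdelta c m) = (\<Sum>m\<in>UNIV. if c = m then f m else (0::real))" by (rule sum.cong) (auto simp: kdelta_def)
  also have "\<dots> = f c" using sum.delta'[of UNIV c f] by simp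
  finally show ?thesis .
qed
lemma kd3[simp]: fixes c :: "'a::finite" shows "(\<Sum>m\<in>UNIV. kdelta m c * f m) = (f c::real)"
proof -
  have "(\<Sum>m\<in>UNIV. kdelta m c * f m) = (\<Sum>m\<in>UNIV. if c = m then f m else (0::real))" by (rule sum.cong) (auto simp: kdelta_def)
  also have "\<dots> = f c" using sum.delta'[of UNIV c f] by simp
  finally show ?thesis .
qed
lemma kd4[simp]: fixes c :: "'a::finite" shows "(\<Sum>m\<in>UNIV. f m * kdelta m c) = (f c::real)"
proof -
  have "(\<Sum>m\<in>UNIV. f m * kdelta m c) = (\<Sum>m\<in>UNIV. if c = m then f m else (0::real))" by (rule sum.cong) (auto simp: kdelta_def)
  also have "\<dots> = f c" using sum.delta'[of UNIV c f] by simp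
  finally show ?thesis .
qed
lemma kd_same[simp]: "kdelta a a = 1" by (simp add: kdelta_def)
lemma kd_sum_same: "(\<Sum>a\<in>(UNIV::'n::finite set). kdelta a a) = real CARD('n)"
  by (simp add: kdelta_def)

locale lset =
  fixes U :: "(real^'n::finite) set"
    and g :: "real^'n \<Rightarrow> real^'n^'n"
    and P :: "real^'n \<Rightarrow> real^'n"
  assumes lm: "lorentzian_metric U g"
    and Psm: "\<forall>k. smooth_on U (\<lambda>x. P x $ k)"
begin

lemma opU: "open U" using lm unfolding lorentzian_metric_def by blast

lemma gsm: "smooth_on U (\<lambda>y. g y $ i $ j)" using lm unfolding lorentzian_metric_def by blast

lemma gd: "x \<in> U \<Longrightarrow> (\<lambda>y. g y $ i $ j) differentiable at x"
  using smooth_diff0[OF gsm opU] .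
lemma gdd: "x \<in> U \<Longrightarrow> pd k (\<lambda>y. g y $ i $ j) differentiable at x"
  using smooth_diff1[OF gsm opU] .
lemma Pd: "x \<in> U \<Longrightarrow> (\<lambda>y. P y $ k) differentiable at x"
  using smooth_diff0[OF spec[OF Psm, of k] opU] .
lemma Pdd: "x \<in> U \<Longrightarrow> pd a (\<lambda>y. P y $ k) differentiable at x"
  using smooth_diff1[OF spec[OF Psm, of k] opU] .
lemma Pddd: "x \<in> U \<Longrightarrow> pd a (pd b (\<lambda>y. P y $ k)) differentiable at x"
  using smooth_diff2[OF spec[OF Psm, of k] opU] .

lemma gmat: "x \<in> U \<Longrightarrow> lorentzian_matrix (g x)"
  using lm unfolding lorentzian_metric_def by blast

lemma gsym: "x \<in> U \<Longrightarrow> g x $ i $ j = g x $ j $ i"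
proof -
  assume x: "x \<in> U"
  have "transpose (g x) = g x" using gmat[OF x] unfolding lorentzian_matrix_def by blast
  then have "transpose (g x) $ j $ i = g x $ j $ i" by simp
  then show ?thesis by (simp add: transpose_def)
qed

lemma ginvert: "x \<in> U \<Longrightarrow> invertible (g x)"
  using gmat lorentzian_invertible by blast

lemma gH: "x \<in> U \<Longrightarrow> (\<Sum>k\<in>UNIV. g x $ i $ k * ginv g x $ k $ j) = kdelta i j"
proof -
  assume x: "x \<in> U"
  have "(g x ** ginv g x) $ i $ j = mat 1 $ i $ j"
    using matrix_inv_props(1)[OF ginvert[OF x]] unfolding ginv_def by simp
  then show ?thesis by (simp add: matrix_matrix_mult_def mat_def kdelta_def)
qed

lemma Hg: "x \<in> U \<Longrightarrow> (\<Sum>k\<in>UNIV. ginv g x $ i $ k * g x $ k $ j) = kdelta i j"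
proof -
  assume x: "x \<in> U"
  have "(ginv g x ** g x) $ i $ j = mat 1 $ i $ j"
    using matrix_inv_props(2)[OF ginvert[OF x]] unfolding ginv_def by simp
  then show ?thesis by (simp add: matrix_matrix_mult_def mat_def kdelta_def)
qed

lemma gH': "x \<in> U \<Longrightarrow> (\<Sum>k\<in>UNIV. g x $ k $ i * ginv g x $ k $ j) = kdelta i j"
proof -
  assume x: "x \<in> U"
  have "(\<Sum>k\<in>UNIV. g x $ k $ i * ginv g x $ k $ j) = (\<Sum>k\<in>UNIV. g x $ i $ k * ginv g x $ k $ j)"
    by (rule sum.cong[OF refl]) (metis gsym[OF x])
  then show ?thesis using gH[OF x] by simp
qed

lemma ginv_d: "x \<in> U \<Longrightarrow> (\<lambda>y. ginv g y $ i $ k) differentiable at x"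
proof -
  assume x: "x \<in> U"
  have eq: "ginv g y $ i $ k = det (\<chi> r s. if s = i then axis k 1 $ r else g y $ r $ s) / det (g y)"
    if "y \<in> U" for y
    unfolding ginv_def by (rule matrix_inv_entry[OF ginvert[OF that]])
  have d0: "det (g x) \<noteq> 0" using ginvert[OF x] invertible_det_nz by blast
  have ent: "(\<lambda>y. (\<chi> r s. if s = i then axis k 1 $ r else g y $ r $ s) $ r $ s) differentiable at x" for r s
    by (cases "s = i") (simp_all add: gd[OF x])
  have hd: "(\<lambda>y. det (\<chi> r s. if s = i then axis k 1 $ r else g y $ r $ s) / det (g y)) differentiable at x"
    by (intro differentiable_divide det_differentiable d0 ent gd[OF x])
  show ?thesis by (rule diff_cong_open[OF opU x _ hd]) (rule eq)
qed

lemma pdg_sym: "x \<in> U \<Longrightarrow> pd k (\<lambda>y. g y $ i $ j) x = pd k (\<lambda>y. g y $ j $ i) x"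
  by (rule pd_cong_open[OF opU]) (auto intro: gsym)

lemma chr_d: "x \<in> U \<Longrightarrow> christoffel g k i j differentiable at x"
proof -
  assume x: "x \<in> U"
  have "(\<lambda>y. christoffel g k i j y) differentiable at x"
    unfolding christoffel_def
    by (intro differentiable_mult differentiable_const differentiable_sum ballI
          differentiable_add differentiable_diff ginv_d[OF x] gdd[OF x]) auto
  then show ?thesis by simp
qed

lemma pi_d: "x \<in> U \<Longrightarrow> pi_form g P j differentiable at x"
proof -
  assume x: "x \<in> U"
  have "(\<lambda>y. pi_form g P j y) differentiable at x"
    unfolding pi_form_def
    by (intro differentiable_mult differentiable_sum ballI gd[OF x] Pd[OF x]) auto
  then show ?thesis by simp
qed

lemma chr_sym: "x \<in> U \<Longrightarrow> christoffel g k i j x = christoffel g k j i x"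
  unfolding christoffel_def using pdg_sym[of x] by (simp add: algebra_simps)

lemma chr_low: "x \<in> U \<Longrightarrow> (\<Sum>l\<in>UNIV. christoffel g l a b x * g x $ l $ c)
   = (1/2) * (pd a (\<lambda>y. g y $ b $ c) x + pd b (\<lambda>y. g y $ a $ c) x - pd c (\<lambda>y. g y $ a $ b) x)"
proof -
  assume x: "x \<in> U"
  define X where "X m = pd a (\<lambda>y. g y $ b $ m) x + pd b (\<lambda>y. g y $ a $ m) x - pd m (\<lambda>y. g y $ a $ b) x" for m
  have "(\<Sum>l\<in>UNIV. christoffel g l a b x * g x $ l $ c)
      = (\<Sum>l\<in>UNIV. (1/2) * (\<Sum>m\<in>UNIV. g x $ l $ c * ginv g x $ l $ m * X m))"
    unfolding christoffel_def X_def
    by (intro sum.cong refl) (simp add: sum_distrib_left sum_distrib_right algebra_simps)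
  also have "\<dots> = (1/2) * (\<Sum>l\<in>UNIV. \<Sum>m\<in>UNIV. g x $ l $ c * ginv g x $ l $ m * X m)"
    by (simp add: sum_distrib_left)
  also have "\<dots> = (1/2) * (\<Sum>m\<in>UNIV. \<Sum>l\<in>UNIV. g x $ l $ c * ginv g x $ l $ m * X m)"
    by (rule arg_cong[where f="\<lambda>t. (1/2) * t"]) (rule sum.swap)
  also have "\<dots> = (1/2) * (\<Sum>m\<in>UNIV. (\<Sum>l\<in>UNIV. g x $ l $ c * ginv g x $ l $ m) * X m)"
    by (simp add: sum_distrib_right)
  also have "\<dots> = (1/2) * X c"
    by (simp add: gH'[OF x])
  finally show ?thesis unfolding X_def .
qed

lemma metric_compat: "x \<in> U \<Longrightarrow> pd a (\<lambda>y. g y $ b $ c) x =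
   (\<Sum>l\<in>UNIV. christoffel g l a b x * g x $ l $ c) + (\<Sum>l\<in>UNIV. christoffel g l a c x * g x $ l $ b)"
  using chr_low[of x a b c] chr_low[of x a c b] pdg_sym[of x] by simp

end

context lset begin

lemma pd_pi: "x \<in> U \<Longrightarrow> pd a (pi_form g P j) x =
   (\<Sum>k\<in>UNIV. pd a (\<lambda>y. g y $ j $ k) x * P x $ k + g x $ j $ k * pd a (\<lambda>y. P y $ k) x)"
proof -
  assume x: "x \<in> U"
  have "pd a (pi_form g P j) x = pd a (\<lambda>y. \<Sum>k\<in>UNIV. g y $ j $ k * P y $ k) x"
    by (simp add: pi_form_def[abs_def])
  also have "\<dots> = (\<Sum>k\<in>UNIV. pd a (\<lambda>y. g y $ j $ k * P y $ k) x)"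
    by (rule pd_sum) (auto intro!: differentiable_mult gd[OF x] Pd[OF x])
  also have "\<dots> = (\<Sum>k\<in>UNIV. pd a (\<lambda>y. g y $ j $ k) x * P x $ k + g x $ j $ k * pd a (\<lambda>y. P y $ k) x)"
    by (rule sum.cong[OF refl]) (rule pd_mult[OF gd[OF x] Pd[OF x]])
  finally show ?thesis .
qed

lemma g_pi: "x \<in> U \<Longrightarrow> (\<Sum>k\<in>UNIV. g x $ j $ k * P x $ k) = pi_form g P j x"
  by (simp add: pi_form_def)

lemma g_pi': "x \<in> U \<Longrightarrow> (\<Sum>k\<in>UNIV. g x $ k $ j * P x $ k) = pi_form g P j x"
  unfolding pi_form_def by (rule sum.cong[OF refl]) (metis gsym)

lemma H_pi: "x \<in> U \<Longrightarrow> (\<Sum>j\<in>UNIV. ginv g x $ i $ j * pi_form g P j x) = P x $ i"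
proof -
  assume x: "x \<in> U"
  have "(\<Sum>j\<in>UNIV. ginv g x $ i $ j * pi_form g P j x)
      = (\<Sum>j\<in>UNIV. \<Sum>k\<in>UNIV. ginv g x $ i $ j * g x $ j $ k * P x $ k)"
    unfolding pi_form_def by (simp add: sum_distrib_left mult.assoc)
  also have "\<dots> = (\<Sum>k\<in>UNIV. \<Sum>j\<in>UNIV. ginv g x $ i $ j * g x $ j $ k * P x $ k)"
    by (rule sum.swap)
  also have "\<dots> = (\<Sum>k\<in>UNIV. (\<Sum>j\<in>UNIV. ginv g x $ i $ j * g x $ j $ k) * P x $ k)"
    by (simp add: sum_distrib_right)
  also have "\<dots> = P x $ i" by (simp add: Hg[OF x])
  finally show ?thesis .
qed

end

locale lset2 = lset U g P for U :: "(real^'n::finite) set" and g and P +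
  assumes conc: "concircular U g P"
    and nrm: "\<forall>x\<in>U. (\<Sum>i\<in>UNIV. \<Sum>j\<in>UNIV. g x $ i $ j * P x $ i * P x $ j) = -1"
begin

lemma piP: "x \<in> U \<Longrightarrow> (\<Sum>j\<in>UNIV. pi_form g P j x * P x $ j) = -1"
proof -
  assume x: "x \<in> U"
  have "(\<Sum>j\<in>UNIV. pi_form g P j x * P x $ j) = (\<Sum>j\<in>UNIV. \<Sum>k\<in>UNIV. g x $ j $ k * P x $ j * P x $ k)"
    unfolding pi_form_def sum_distrib_right by (simp add: mult_ac)
  also have "\<dots> = -1" using nrm x by simp
  finally show ?thesis .
qed

end

context lset2 begin

lemma omega_one:
  assumes om: "\<forall>x\<in>U. \<forall>a b. pd a (pi_form g P b) x - (\<Sum>p\<in>UNIV. christoffel g p a b x * pi_form g P p x)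
      - pi_form g P a x * pi_form g P b x = \<omega> x * g x $ a $ b"
    and x: "x \<in> U"
  shows "\<omega> x = 1"
proof -
  have key: "(\<omega> x - 1) * pi_form g P a x = 0" for a
  proof -
    define A where "A = (\<Sum>j\<in>UNIV. pd a (pi_form g P j) x * P x $ j)"
    define B where "B = (\<Sum>j\<in>UNIV. \<Sum>k\<in>UNIV. pd a (\<lambda>y. g y $ j $ k) x * P x $ k * P x $ j)"
    define C where "C = (\<Sum>k\<in>UNIV. pi_form g P k x * pd a (\<lambda>y. P y $ k) x)"
    define D where "D = (\<Sum>j\<in>UNIV. \<Sum>l\<in>UNIV. christoffel g l a j x * pi_form g P l x * P x $ j)"
    have "pd a (\<lambda>y. \<Sum>j\<in>UNIV. pi_form g P j y * P y $ j) x = pd a (\<lambda>y. -1) x"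
      by (rule pd_cong_open[OF opU x]) (simp add: piP)
    also have "\<dots> = 0" by (rule pd_const)
    finally have e0: "pd a (\<lambda>y. \<Sum>j\<in>UNIV. pi_form g P j y * P y $ j) x = 0" .
    have "pd a (\<lambda>y. \<Sum>j\<in>UNIV. pi_form g P j y * P y $ j) x
        = (\<Sum>j\<in>UNIV. pd a (\<lambda>y. pi_form g P j y * P y $ j) x)"
      by (rule pd_sum) (auto intro!: differentiable_mult pi_d[OF x, simplified] Pd[OF x])
    also have "\<dots> = (\<Sum>j\<in>UNIV. pd a (pi_form g P j) x * P x $ j + pi_form g P j x * pd a (\<lambda>y. P y $ j) x)"
      by (rule sum.cong[OF refl]) (rule pd_mult[OF pi_d[OF x, simplified] Pd[OF x], simplified])
    also have "\<dots> = A + C" unfolding A_def C_def by (simp add: sum.distrib)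
    finally have e1: "A + C = 0" using e0 by simp
    have "A = (\<Sum>j\<in>UNIV. (\<Sum>k\<in>UNIV. pd a (\<lambda>y. g y $ j $ k) x * P x $ k + g x $ j $ k * pd a (\<lambda>y. P y $ k) x) * P x $ j)"
      unfolding A_def by (simp add: pd_pi[OF x])
    also have "\<dots> = B + (\<Sum>j\<in>UNIV. \<Sum>k\<in>UNIV. g x $ j $ k * pd a (\<lambda>y. P y $ k) x * P x $ j)"
      unfolding B_def by (simp add: distrib_right sum_distrib_right sum.distrib)
    also have "(\<Sum>j\<in>UNIV. \<Sum>k\<in>UNIV. g x $ j $ k * pd a (\<lambda>y. P y $ k) x * P x $ j)
        = (\<Sum>k\<in>UNIV. \<Sum>j\<in>UNIV. g x $ j $ k * pd a (\<lambda>y. P y $ k) x * P x $ j)"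
      by (rule sum.swap)
    also have "\<dots> = (\<Sum>k\<in>UNIV. (\<Sum>j\<in>UNIV. g x $ j $ k * P x $ j) * pd a (\<lambda>y. P y $ k) x)"
      by (simp add: sum_distrib_right sum_distrib_left mult_ac)
    also have "\<dots> = C" unfolding C_def by (simp add: g_pi'[OF x])
    finally have e3: "A = B + C" .
    have "B = (\<Sum>j\<in>UNIV. \<Sum>k\<in>UNIV. ((\<Sum>l\<in>UNIV. christoffel g l a j x * g x $ l $ k) + (\<Sum>l\<in>UNIV. christoffel g l a k x * g x $ l $ j)) * P x $ k * P x $ j)"
      unfolding B_def by (simp add: metric_compat[OF x])
    also have "\<dots> = (\<Sum>j\<in>UNIV. \<Sum>k\<in>UNIV. (\<Sum>l\<in>UNIV. christoffel g l a j x * g x $ l $ k) * P x $ k * P x $ j)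
        + (\<Sum>j\<in>UNIV. \<Sum>k\<in>UNIV. (\<Sum>l\<in>UNIV. christoffel g l a k x * g x $ l $ j) * P x $ k * P x $ j)"
      by (simp add: distrib_right sum.distrib)
    also have "(\<Sum>j\<in>UNIV. \<Sum>k\<in>UNIV. (\<Sum>l\<in>UNIV. christoffel g l a k x * g x $ l $ j) * P x $ k * P x $ j)
       = (\<Sum>k\<in>UNIV. \<Sum>j\<in>UNIV. (\<Sum>l\<in>UNIV. christoffel g l a k x * g x $ l $ j) * P x $ k * P x $ j)"
      by (rule sum.swap)
    also have "\<dots> = (\<Sum>j\<in>UNIV. \<Sum>k\<in>UNIV. (\<Sum>l\<in>UNIV. christoffel g l a j x * g x $ l $ k) * P x $ k * P x $ j)"
      by (simp add: mult_ac)
    also have "(\<Sum>j\<in>UNIV. \<Sum>k\<in>UNIV. (\<Sum>l\<in>UNIV. christoffel g l a j x * g x $ l $ k) * P x $ k * P x $ j) = D"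
    proof -
      have "(\<Sum>j\<in>UNIV. \<Sum>k\<in>UNIV. (\<Sum>l\<in>UNIV. christoffel g l a j x * g x $ l $ k) * P x $ k * P x $ j)
          = (\<Sum>j\<in>UNIV. \<Sum>k\<in>UNIV. \<Sum>l\<in>UNIV. christoffel g l a j x * g x $ l $ k * P x $ k * P x $ j)"
        by (simp add: sum_distrib_right)
      also have "\<dots> = (\<Sum>j\<in>UNIV. \<Sum>l\<in>UNIV. \<Sum>k\<in>UNIV. christoffel g l a j x * g x $ l $ k * P x $ k * P x $ j)"
        by (rule sum.cong[OF refl]) (rule sum.swap)
      also have "\<dots> = (\<Sum>j\<in>UNIV. \<Sum>l\<in>UNIV. christoffel g l a j x * (\<Sum>k\<in>UNIV. g x $ l $ k * P x $ k) * P x $ j)"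
        by (simp add: sum_distrib_right sum_distrib_left mult_ac)
      also have "\<dots> = D" unfolding D_def by (simp add: g_pi[OF x])
      finally show ?thesis .
    qed
    finally have e4: "B = D + D" .
    have "A - D - pi_form g P a x * (\<Sum>j\<in>UNIV. pi_form g P j x * P x $ j) = \<omega> x * (\<Sum>j\<in>UNIV. g x $ a $ j * P x $ j)"
    proof -
      have "(\<Sum>j\<in>UNIV. (pd a (pi_form g P j) x - (\<Sum>p\<in>UNIV. christoffel g p a j x * pi_form g P p x)
           - pi_form g P a x * pi_form g P j x) * P x $ j) = (\<Sum>j\<in>UNIV. \<omega> x * g x $ a $ j * P x $ j)"
        using om x by simp
      then show ?thesis unfolding A_def D_def
        by (simp add: algebra_simps sum_subtractf sum_distrib_left sum_distrib_right sum.distrib)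
    qed
    then have e2: "A - D + pi_form g P a x = \<omega> x * pi_form g P a x"
      by (simp add: piP[OF x] g_pi[OF x])
    have "\<omega> x * pi_form g P a x = pi_form g P a x" using e1 e3 e4 e2 by linarith
    then show ?thesis by (simp add: algebra_simps)
  qed
  have "\<exists>a. pi_form g P a x \<noteq> 0"
  proof (rule ccontr)
    assume "\<not> (\<exists>a. pi_form g P a x \<noteq> 0)"
    then have "(\<Sum>j\<in>UNIV. pi_form g P j x * P x $ j) = 0" by simp
    then show False using piP[OF x] by simp
  qed
  then obtain a where "pi_form g P a x \<noteq> 0" by blast
  with key[of a] show ?thesis by simp
qed

lemma conc1: "x \<in> U \<Longrightarrow> pd a (pi_form g P b) x =
   (\<Sum>p\<in>UNIV. christoffel g p a b x * pi_form g P p x) + g x $ a $ b + pi_form g P a x * pi_form g P b x"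
proof -
  assume x: "x \<in> U"
  obtain \<omega> where om: "\<forall>x\<in>U. \<forall>a b. pd a (pi_form g P b) x - (\<Sum>p\<in>UNIV. christoffel g p a b x * pi_form g P p x)
      - pi_form g P a x * pi_form g P b x = \<omega> x * g x $ a $ b"
    using conc unfolding concircular_def by blast
  have "\<omega> x = 1" by (rule omega_one[OF om x])
  with om x show ?thesis by (auto simp: algebra_simps)
qed

end

context lset2 begin

lemma dP: "x \<in> U \<Longrightarrow> pd a (\<lambda>y. P y $ m) x =
   kdelta m a + pi_form g P a x * P x $ m - (\<Sum>q\<in>UNIV. christoffel g m a q x * P x $ q)"
proof -
  assume x: "x \<in> U"
  define W where "W k = pd a (\<lambda>y. P y $ k) x + (\<Sum>q\<in>UNIV. christoffel g k a q x * P x $ q)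
      - kdelta k a - pi_form g P a x * P x $ k" for k
  define T1 where "T1 b = (\<Sum>k\<in>UNIV. \<Sum>l\<in>UNIV. christoffel g l a k x * g x $ l $ b * P x $ k)" for b
  have s1: "(\<Sum>k\<in>UNIV. pd a (\<lambda>y. g y $ b $ k) x * P x $ k)
      = (\<Sum>l\<in>UNIV. christoffel g l a b x * pi_form g P l x) + T1 b" for b
  proof -
    have "(\<Sum>k\<in>UNIV. pd a (\<lambda>y. g y $ b $ k) x * P x $ k)
       = (\<Sum>k\<in>UNIV. (\<Sum>l\<in>UNIV. christoffel g l a b x * g x $ l $ k) * P x $ k) + T1 b"
      unfolding T1_def metric_compat[OF x] by (simp add: distrib_right sum.distrib sum_distrib_right)
    also have "(\<Sum>k\<in>UNIV. (\<Sum>l\<in>UNIV. christoffel g l a b x * g x $ l $ k) * P x $ k)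
       = (\<Sum>k\<in>UNIV. \<Sum>l\<in>UNIV. christoffel g l a b x * g x $ l $ k * P x $ k)"
      by (simp add: sum_distrib_right)
    also have "\<dots> = (\<Sum>l\<in>UNIV. \<Sum>k\<in>UNIV. christoffel g l a b x * g x $ l $ k * P x $ k)"
      by (rule sum.swap)
    also have "\<dots> = (\<Sum>l\<in>UNIV. christoffel g l a b x * pi_form g P l x)"
      unfolding pi_form_def by (simp add: sum_distrib_left mult_ac)
    finally show ?thesis .
  qed
  have s2: "(\<Sum>k\<in>UNIV. g x $ b $ k * (\<Sum>q\<in>UNIV. christoffel g k a q x * P x $ q)) = T1 b" for b
  proof -
    have "(\<Sum>k\<in>UNIV. g x $ b $ k * (\<Sum>q\<in>UNIV. christoffel g k a q x * P x $ q))
       = (\<Sum>k\<in>UNIV. \<Sum>q\<in>UNIV. christoffel g k a q x * g x $ k $ b * P x $ q)"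
      by (rule sum.cong[OF refl]) (simp add: sum_distrib_left mult_ac gsym[OF x, of b])
    also have "\<dots> = (\<Sum>q\<in>UNIV. \<Sum>k\<in>UNIV. christoffel g k a q x * g x $ k $ b * P x $ q)"
      by (rule sum.swap)
    also have "\<dots> = T1 b" unfolding T1_def ..
    finally show ?thesis .
  qed
  have gW: "(\<Sum>k\<in>UNIV. g x $ b $ k * W k) = 0" for b
  proof -
    have c1: "(\<Sum>k\<in>UNIV. pd a (\<lambda>y. g y $ b $ k) x * P x $ k + g x $ b $ k * pd a (\<lambda>y. P y $ k) x)
      = (\<Sum>p\<in>UNIV. christoffel g p a b x * pi_form g P p x) + g x $ a $ b + pi_form g P a x * pi_form g P b x"
      using conc1[OF x, of a b] pd_pi[OF x, of a b] by simp
    then have c2: "(\<Sum>k\<in>UNIV. g x $ b $ k * pd a (\<lambda>y. P y $ k) x)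
        = g x $ a $ b + pi_form g P a x * pi_form g P b x - T1 b"
      using s1[of b] by (simp add: sum.distrib)
    have "(\<Sum>k\<in>UNIV. g x $ b $ k * W k) = (\<Sum>k\<in>UNIV. g x $ b $ k * pd a (\<lambda>y. P y $ k) x)
       + (\<Sum>k\<in>UNIV. g x $ b $ k * (\<Sum>q\<in>UNIV. christoffel g k a q x * P x $ q))
       - (\<Sum>k\<in>UNIV. g x $ b $ k * kdelta k a) - pi_form g P a x * (\<Sum>k\<in>UNIV. g x $ b $ k * P x $ k)"
      unfolding W_def by (simp add: algebra_simps sum.distrib sum_subtractf sum_distrib_left)
    also have "\<dots> = 0" using c2 s2[of b] by (simp add: g_pi[OF x] gsym[OF x, of a b])
    finally show ?thesis .
  qed
  have "W m = (\<Sum>b\<in>UNIV. kdelta m b * W b)" by simp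
  also have "\<dots> = (\<Sum>b\<in>UNIV. (\<Sum>k\<in>UNIV. ginv g x $ m $ k * g x $ k $ b) * W b)"
    by (simp add: Hg[OF x])
  also have "\<dots> = (\<Sum>b\<in>UNIV. \<Sum>k\<in>UNIV. ginv g x $ m $ k * g x $ k $ b * W b)"
    by (simp add: sum_distrib_right)
  also have "\<dots> = (\<Sum>k\<in>UNIV. \<Sum>b\<in>UNIV. ginv g x $ m $ k * g x $ k $ b * W b)"
    by (rule sum.swap)
  also have "\<dots> = (\<Sum>k\<in>UNIV. ginv g x $ m $ k * (\<Sum>b\<in>UNIV. g x $ k $ b * W b))"
    by (simp add: sum_distrib_left mult_ac)
  also have "\<dots> = 0" by (simp add: gW)
  finally have "W m = 0" .
  then show ?thesis unfolding W_def by (simp add: kdelta_def algebra_simps)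
qed

end

context lset2 begin

lemma pd_pi_sym: "x \<in> U \<Longrightarrow> pd a (pi_form g P b) x = pd b (pi_form g P a) x"
  using conc1[of x a b] conc1[of x b a] chr_sym[of x] gsym[of x a b] by (simp add: mult.commute)

lemma ricci_id: "x \<in> U \<Longrightarrow> (\<Sum>c\<in>UNIV. curvg g a b c m x * P x $ c)
   = pi_form g P b x * kdelta m a - pi_form g P a x * kdelta m b"
proof -
  assume x: "x \<in> U"
  define GP where "GP m a = (\<Sum>q\<in>UNIV. christoffel g m a q x * P x $ q)" for m a
  define GG where "GG m a b = (\<Sum>p\<in>UNIV. \<Sum>q\<in>UNIV. christoffel g m a p x * christoffel g p b q x * P x $ q)" for m a b
  define X where "X a b = (\<Sum>p\<in>UNIV. christoffel g m b p x * pd a (\<lambda>y. P y $ p) x)" for a b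
  have V: "pd b (\<lambda>y. P y $ m) y + (\<Sum>p\<in>UNIV. christoffel g m b p y * P y $ p) = kdelta m b + pi_form g P b y * P y $ m"
    if "y \<in> U" for b y
    using dP[OF that, of b m] by simp
  have ii: "(\<Sum>c\<in>UNIV. pd a (christoffel g m b c) x * P x $ c)
      = pd a (pi_form g P b) x * P x $ m + pi_form g P b x * pd a (\<lambda>y. P y $ m) x
        - pd a (pd b (\<lambda>y. P y $ m)) x - X a b" for a b
  proof -
    have "pd a (\<lambda>y. pd b (\<lambda>y. P y $ m) y + (\<Sum>p\<in>UNIV. christoffel g m b p y * P y $ p)) x
        = pd a (\<lambda>y. kdelta m b + pi_form g P b y * P y $ m) x"
      by (rule pd_cong_open[OF opU x]) (rule V)
    moreover have "pd a (\<lambda>y. pd b (\<lambda>y. P y $ m) y + (\<Sum>p\<in>UNIV. christoffel g m b p y * P y $ p)) x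
        = pd a (pd b (\<lambda>y. P y $ m)) x + (\<Sum>p\<in>UNIV. pd a (christoffel g m b p) x * P x $ p) + X a b"
    proof -
      have d1: "(\<lambda>y. \<Sum>p\<in>UNIV. christoffel g m b p y * P y $ p) differentiable at x"
        by (intro differentiable_sum differentiable_mult ballI chr_d[OF x, simplified] Pd[OF x]) auto
      have "pd a (\<lambda>y. pd b (\<lambda>y. P y $ m) y + (\<Sum>p\<in>UNIV. christoffel g m b p y * P y $ p)) x
          = pd a (pd b (\<lambda>y. P y $ m)) x + pd a (\<lambda>y. \<Sum>p\<in>UNIV. christoffel g m b p y * P y $ p) x"
        using pd_add[OF Pdd[OF x, of b m] d1] by simp
      also have "pd a (\<lambda>y. \<Sum>p\<in>UNIV. christoffel g m b p y * P y $ p) x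
          = (\<Sum>p\<in>UNIV. pd a (\<lambda>y. christoffel g m b p y * P y $ p) x)"
        by (rule pd_sum) (auto intro!: differentiable_mult chr_d[OF x, simplified] Pd[OF x])
      also have "\<dots> = (\<Sum>p\<in>UNIV. pd a (christoffel g m b p) x * P x $ p + christoffel g m b p x * pd a (\<lambda>y. P y $ p) x)"
        by (rule sum.cong[OF refl]) (rule pd_mult[OF chr_d[OF x, simplified] Pd[OF x], simplified])
      finally show ?thesis unfolding X_def by (simp add: sum.distrib)
    qed
    moreover have "pd a (\<lambda>y. kdelta m b + pi_form g P b y * P y $ m) x
        = pd a (pi_form g P b) x * P x $ m + pi_form g P b x * pd a (\<lambda>y. P y $ m) x"
    proof -
      have "pd a (\<lambda>y. kdelta m b + pi_form g P b y * P y $ m) x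
          = pd a (\<lambda>y. kdelta m b) x + pd a (\<lambda>y. pi_form g P b y * P y $ m) x"
        by (rule pd_add) (auto intro!: differentiable_mult pi_d[OF x, simplified] Pd[OF x])
      also have "\<dots> = pd a (pi_form g P b) x * P x $ m + pi_form g P b x * pd a (\<lambda>y. P y $ m) x"
        using pd_mult[OF pi_d[OF x, simplified] Pd[OF x], of a b m] by (simp add: pd_const)
      finally show ?thesis .
    qed
    ultimately show ?thesis by (simp add: algebra_simps)
  qed
  have iii: "X a b = christoffel g m b a x + pi_form g P a x * GP m b - GG m b a" for a b
  proof -
    have "X a b = (\<Sum>p\<in>UNIV. christoffel g m b p x * kdelta p a) + pi_form g P a x * (\<Sum>p\<in>UNIV. christoffel g m b p x * P x $ p)
        - (\<Sum>p\<in>UNIV. christoffel g m b p x * (\<Sum>q\<in>UNIV. christoffel g p a q x * P x $ q))"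
      unfolding X_def dP[OF x]
      by (simp add: algebra_simps sum.distrib sum_subtractf sum_distrib_left)
    also have "\<dots> = christoffel g m b a x + pi_form g P a x * GP m b - GG m b a"
      unfolding GP_def GG_def by (simp add: sum_distrib_left mult.assoc)
    finally show ?thesis .
  qed
  have i: "(\<Sum>c\<in>UNIV. curvg g a b c m x * P x $ c)
     = (\<Sum>c\<in>UNIV. pd a (christoffel g m b c) x * P x $ c) - (\<Sum>c\<in>UNIV. pd b (christoffel g m a c) x * P x $ c)
       + GG m a b - GG m b a"
  proof -
    have q: "(\<Sum>c\<in>UNIV. (\<Sum>p\<in>UNIV. christoffel g p b c x * christoffel g m a p x) * P x $ c) = GG m a b" for a b
    proof -
      have "(\<Sum>c\<in>UNIV. (\<Sum>p\<in>UNIV. christoffel g p b c x * christoffel g m a p x) * P x $ c)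
          = (\<Sum>c\<in>UNIV. \<Sum>p\<in>UNIV. christoffel g m a p x * christoffel g p b c x * P x $ c)"
        by (simp add: sum_distrib_right sum_distrib_left mult_ac)
      also have "\<dots> = GG m a b" unfolding GG_def by (rule sum.swap)
      finally show ?thesis .
    qed
    show ?thesis
      unfolding curvg_def curv_def using q[of a b] q[of b a]
      by (simp add: algebra_simps sum.distrib sum_subtractf)
  qed
  have vi: "pd a (pd b (\<lambda>y. P y $ m)) x = pd b (pd a (\<lambda>y. P y $ m)) x"
    by (rule schwarz[OF opU x Pd Pdd[OF x] Pdd[OF x]])
  show ?thesis
    unfolding i ii iii dP[OF x, of a m] dP[OF x, of b m] GP_def[symmetric]
    using vi pd_pi_sym[OF x, of a b] chr_sym[OF x, of m a b]
    by (simp add: algebra_simps)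
qed

end

lemma kd_lin: fixes a b :: "'a::finite" shows
  "(\<Sum>p\<in>UNIV. (u * kdelta p a - v * kdelta p b) * X p) = u * X a - (v::real) * X b"
  by (simp add: left_diff_distrib sum_subtractf mult.assoc flip: sum_distrib_left)

context lset2 begin

lemma conn1_fun: "conn1 g P m b c = (\<lambda>y. christoffel g m b c y + pi_form g P c y * kdelta m b - g y $ b $ c * P y $ m)"
  by (rule ext) (simp add: conn1_def)

lemma torsion1_fun: "torsion1 g P m a c = (\<lambda>y. pi_form g P c y * kdelta m a - pi_form g P a y * kdelta m c)"
  by (rule ext) (simp add: torsion1_def)

lemma pd_cmult: "f differentiable at x \<Longrightarrow> pd a (\<lambda>y. f y * k) x = pd a f x * k"
  using pd_mult[of f x "\<lambda>y. k" a] by (simp add: pd_const)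

lemma pd_conn1: "x \<in> U \<Longrightarrow> pd a (conn1 g P m b c) x = pd a (christoffel g m b c) x
   + pd a (pi_form g P c) x * kdelta m b
   - (pd a (\<lambda>y. g y $ b $ c) x * P x $ m + g x $ b $ c * pd a (\<lambda>y. P y $ m) x)"
proof -
  assume x: "x \<in> U"
  have d1: "(\<lambda>y. pi_form g P c y * kdelta m b) differentiable at x"
    using pi_d[OF x] by (auto intro!: differentiable_mult)
  have d2: "(\<lambda>y. g y $ b $ c * P y $ m) differentiable at x"
    by (intro differentiable_mult gd[OF x] Pd[OF x])
  have d3: "(\<lambda>y. christoffel g m b c y + pi_form g P c y * kdelta m b) differentiable at x"
    using chr_d[OF x] d1 by (auto intro!: differentiable_add)
  show ?thesis unfolding conn1_fun
    using pd_diff[OF d3 d2, of a] pd_add[OF chr_d[OF x, simplified] d1, of a]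
      pd_cmult[OF pi_d[OF x, of c, simplified], of a "kdelta m b"] pd_mult[OF gd[OF x] Pd[OF x], of a b c m]
    by simp
qed

lemma pd_tors: "x \<in> U \<Longrightarrow> pd b (torsion1 g P m a c) x =
   pd b (pi_form g P c) x * kdelta m a - pd b (pi_form g P a) x * kdelta m c"
proof -
  assume x: "x \<in> U"
  have d1: "(\<lambda>y. pi_form g P c y * kdelta m a) differentiable at x"
    using pi_d[OF x] by (auto intro!: differentiable_mult)
  have d2: "(\<lambda>y. pi_form g P a y * kdelta m c) differentiable at x"
    using pi_d[OF x] by (auto intro!: differentiable_mult)
  show ?thesis unfolding torsion1_fun
    using pd_diff[OF d1 d2, of b] pd_cmult[OF pi_d[OF x, of c, simplified], of b "kdelta m a"] pd_cmult[OF pi_d[OF x, of a, simplified], of b "kdelta m c"]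
    by simp
qed

lemma sumA_pi: "x \<in> U \<Longrightarrow> (\<Sum>p\<in>UNIV. conn1 g P p b c x * pi_form g P p x)
   = (\<Sum>p\<in>UNIV. christoffel g p b c x * pi_form g P p x) + pi_form g P b x * pi_form g P c x + g x $ b $ c"
proof -
  assume x: "x \<in> U"
  have "(\<Sum>p\<in>UNIV. conn1 g P p b c x * pi_form g P p x)
     = (\<Sum>p\<in>UNIV. christoffel g p b c x * pi_form g P p x) + pi_form g P c x * (\<Sum>p\<in>UNIV. kdelta p b * pi_form g P p x)
       - g x $ b $ c * (\<Sum>p\<in>UNIV. pi_form g P p x * P x $ p)"
    unfolding conn1_def by (simp add: algebra_simps sum.distrib sum_subtractf sum_distrib_left)
  then show ?thesis using piP[OF x] by (simp add: mult.commute)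
qed

lemma nablaT_zero: "x \<in> U \<Longrightarrow> nabla1_torsion g P b m a c x = 0"
proof -
  assume x: "x \<in> U"
  have s1: "(\<Sum>p\<in>UNIV. conn1 g P m b p x * torsion1 g P p a c x) = pi_form g P c x * conn1 g P m b a x - pi_form g P a x * conn1 g P m b c x"
    unfolding torsion1_def by (simp add: algebra_simps sum_subtractf sum_distrib_left)
  have s2: "(\<Sum>p\<in>UNIV. conn1 g P p b a x * torsion1 g P m p c x) = pi_form g P c x * conn1 g P m b a x - kdelta m c * (\<Sum>p\<in>UNIV. conn1 g P p b a x * pi_form g P p x)"
    unfolding torsion1_def by (simp add: algebra_simps sum_subtractf sum_distrib_left)
  have s3: "(\<Sum>p\<in>UNIV. conn1 g P p b c x * torsion1 g P m a p x) = kdelta m a * (\<Sum>p\<in>UNIV. conn1 g P p b c x * pi_form g P p x) - pi_form g P a x * conn1 g P m b c x"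
    unfolding torsion1_def by (simp add: algebra_simps sum_subtractf sum_distrib_left)
  show ?thesis unfolding nabla1_torsion_def s1 s2 s3 pd_tors[OF x] sumA_pi[OF x] conc1[OF x]
    using gsym[OF x, of a b] by (simp add: algebra_simps)
qed

lemma TT: "(\<Sum>p\<in>UNIV. torsion1 g P p a b x * torsion1 g P m p c x)
   = pi_form g P b x * pi_form g P c x * kdelta m a - pi_form g P a x * pi_form g P c x * kdelta m b"
proof -
  have "(\<Sum>p\<in>UNIV. torsion1 g P p a b x * torsion1 g P m p c x)
     = pi_form g P b x * torsion1 g P m a c x - pi_form g P a x * torsion1 g P m b c x"
    unfolding torsion1_def[of g P _ a b] by (rule kd_lin)
  then show ?thesis unfolding torsion1_def by (simp add: algebra_simps)
qed

end

lemma sumA: fixes b :: "'a::finite" shows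
  "(\<Sum>p\<in>UNIV. (X p + u * kdelta p b - v * Z p) * Y p) = (\<Sum>p\<in>UNIV. X p * Y p) + u * Y b - (v::real) * (\<Sum>p\<in>UNIV. Z p * Y p)"
  by (simp add: algebra_simps sum.distrib sum_subtractf flip: sum_distrib_left)

lemma sumB: fixes X :: "'a::finite \<Rightarrow> real" shows
  "(\<Sum>p\<in>UNIV. X p * (Y p + Z p * k - W p * c)) = (\<Sum>p\<in>UNIV. X p * Y p) + k * (\<Sum>p\<in>UNIV. X p * Z p) - c * (\<Sum>p\<in>UNIV. X p * W p)"
  by (simp add: algebra_simps sum.distrib sum_subtractf flip: sum_distrib_left sum_distrib_right)

context lset2 begin

lemma Q_eq: "x \<in> U \<Longrightarrow> (\<Sum>p\<in>UNIV. conn1 g P p b c x * conn1 g P m a p x)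
  = (\<Sum>p\<in>UNIV. christoffel g p b c x * christoffel g m a p x)
    + kdelta m a * (\<Sum>p\<in>UNIV. christoffel g p b c x * pi_form g P p x)
    - P x $ m * (\<Sum>l\<in>UNIV. christoffel g l b c x * g x $ l $ a)
    + pi_form g P c x * (christoffel g m a b x + pi_form g P b x * kdelta m a - g x $ a $ b * P x $ m)
    - g x $ b $ c * ((\<Sum>q\<in>UNIV. christoffel g m a q x * P x $ q) - kdelta m a - P x $ m * pi_form g P a x)"
proof -
  assume x: "x \<in> U"
  have e1: "(\<Sum>p\<in>UNIV. conn1 g P p b c x * conn1 g P m a p x)
     = (\<Sum>p\<in>UNIV. christoffel g p b c x * conn1 g P m a p x) + pi_form g P c x * conn1 g P m a b x
       - g x $ b $ c * (\<Sum>p\<in>UNIV. P x $ p * conn1 g P m a p x)"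
    unfolding conn1_def[of g P _ b c x] by (rule sumA)
  have e2: "(\<Sum>p\<in>UNIV. christoffel g p b c x * conn1 g P m a p x)
     = (\<Sum>p\<in>UNIV. christoffel g p b c x * christoffel g m a p x)
    + kdelta m a * (\<Sum>p\<in>UNIV. christoffel g p b c x * pi_form g P p x)
    - P x $ m * (\<Sum>p\<in>UNIV. christoffel g p b c x * g x $ a $ p)"
    unfolding conn1_def[of g P m a _ x] by (rule sumB)
  have e3: "(\<Sum>p\<in>UNIV. P x $ p * conn1 g P m a p x)
     = (\<Sum>q\<in>UNIV. christoffel g m a q x * P x $ q) - kdelta m a - P x $ m * pi_form g P a x"
  proof -
    have "(\<Sum>p\<in>UNIV. P x $ p * conn1 g P m a p x)
       = (\<Sum>p\<in>UNIV. P x $ p * christoffel g m a p x) + kdelta m a * (\<Sum>p\<in>UNIV. P x $ p * pi_form g P p x)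
         - P x $ m * (\<Sum>p\<in>UNIV. P x $ p * g x $ a $ p)"
      unfolding conn1_def[of g P m a _ x] by (rule sumB)
    then show ?thesis using piP[OF x] g_pi[OF x, of a]
      by (simp add: mult.commute)
  qed
  have e4: "(\<Sum>p\<in>UNIV. christoffel g p b c x * g x $ a $ p) = (\<Sum>l\<in>UNIV. christoffel g l b c x * g x $ l $ a)"
    by (rule sum.cong[OF refl]) (metis gsym[OF x])
  show ?thesis unfolding e1 e2 e3 e4 conn1_def[of g P m a b x] by simp
qed

lemma sum_chr_sym: "x \<in> U \<Longrightarrow> (\<Sum>l\<in>UNIV. christoffel g l a b x * h l) = (\<Sum>l\<in>UNIV. christoffel g l b a x * h l)"
  by (rule sum.cong[OF refl]) (metis chr_sym)

lemma curv1_eq: "x \<in> U \<Longrightarrow> curv1 g P a b c m x = curvg g a b c m x + g x $ a $ c * kdelta m b - g x $ b $ c * kdelta m a"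
proof -
  assume x: "x \<in> U"
  show ?thesis
    unfolding curv1_def curvg_def curv_def pd_conn1[OF x] Q_eq[OF x] conc1[OF x] metric_compat[OF x] dP[OF x]
    using sum_chr_sym[OF x, of a b "\<lambda>l. g x $ l $ c"] chr_sym[OF x, of m a b] gsym[OF x, of a c] gsym[OF x, of b c]
      gsym[OF x, of a b]
    by (simp add: algebra_simps)
qed

lemma curv4_eq: "x \<in> U \<Longrightarrow> curv4 g P a b c m x = curvg g a b c m x + g x $ a $ c * kdelta m b - g x $ b $ c * kdelta m a
   - pi_form g P b x * pi_form g P c x * kdelta m a + pi_form g P a x * pi_form g P c x * kdelta m b"
  unfolding curv4_def by (simp add: curv1_eq nablaT_zero TT)

end

context lset2 begin

lemma Ric4_eq: "x \<in> U \<Longrightarrow> Ric4 g P b c x = Ricg g b c x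
   - (real CARD('n) - 1) * (g x $ b $ c + pi_form g P b x * pi_form g P c x)"
proof -
  assume x: "x \<in> U"
  have "Ric4 g P b c x = (\<Sum>a\<in>UNIV. curvg g a b c a x + g x $ a $ c * kdelta a b - g x $ b $ c * kdelta a a
   - pi_form g P b x * pi_form g P c x * kdelta a a + pi_form g P a x * pi_form g P c x * kdelta a b)"
    unfolding Ric4_def ricci_of_def by (simp add: curv4_eq[OF x])
  also have "\<dots> = Ricg g b c x + g x $ b $ c - real CARD('n) * g x $ b $ c
      - real CARD('n) * (pi_form g P b x * pi_form g P c x) + pi_form g P b x * pi_form g P c x"
    unfolding Ricg_def ricci_of_def by (simp add: sum.distrib sum_subtractf)
  finally show ?thesis by (simp add: algebra_simps)
qed

lemma Ricg_P: "x \<in> U \<Longrightarrow> (\<Sum>c\<in>UNIV. Ricg g b c x * P x $ c) = (real CARD('n) - 1) * pi_form g P b x"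
proof -
  assume x: "x \<in> U"
  have "(\<Sum>c\<in>UNIV. Ricg g b c x * P x $ c) = (\<Sum>c\<in>UNIV. \<Sum>a\<in>UNIV. curvg g a b c a x * P x $ c)"
    unfolding Ricg_def ricci_of_def by (simp add: sum_distrib_right)
  also have "\<dots> = (\<Sum>a\<in>UNIV. \<Sum>c\<in>UNIV. curvg g a b c a x * P x $ c)" by (rule sum.swap)
  also have "\<dots> = (\<Sum>a\<in>UNIV. pi_form g P b x * kdelta a a - pi_form g P a x * kdelta a b)"
    by (simp add: ricci_id[OF x])
  also have "\<dots> = real CARD('n) * pi_form g P b x - pi_form g P b x"
    by (simp add: sum_subtractf)
  finally show ?thesis by (simp add: algebra_simps)
qed

lemma contractP: "x \<in> U \<Longrightarrow> (\<Sum>c\<in>UNIV. (k * g x $ b $ c + k' * (pi_form g P b x * pi_form g P c x)) * P x $ c)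
   = k * pi_form g P b x - k' * pi_form g P b x"
proof -
  assume x: "x \<in> U"
  have "(\<Sum>c\<in>UNIV. (k * g x $ b $ c + k' * (pi_form g P b x * pi_form g P c x)) * P x $ c)
     = k * (\<Sum>c\<in>UNIV. g x $ b $ c * P x $ c) + k' * pi_form g P b x * (\<Sum>c\<in>UNIV. pi_form g P c x * P x $ c)"
    by (simp add: algebra_simps sum.distrib sum_distrib_left)
  then show ?thesis by (simp add: g_pi[OF x] piP[OF x])
qed

lemma trace_g: "x \<in> U \<Longrightarrow> (\<Sum>b\<in>UNIV. \<Sum>c\<in>UNIV. ginv g x $ b $ c * g x $ b $ c) = real CARD('n)"
proof -
  assume x: "x \<in> U"
  have "(\<Sum>b\<in>UNIV. \<Sum>c\<in>UNIV. ginv g x $ b $ c * g x $ b $ c) = (\<Sum>b\<in>UNIV. \<Sum>c\<in>UNIV. ginv g x $ b $ c * g x $ c $ b)"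
    by (intro sum.cong refl) (metis gsym[OF x])
  also have "\<dots> = (\<Sum>b\<in>(UNIV::'n set). kdelta b b)" by (simp add: Hg[OF x])
  also have "\<dots> = real CARD('n)" by (rule kd_sum_same)
  finally show ?thesis .
qed

lemma trace_pp: "x \<in> U \<Longrightarrow> (\<Sum>b\<in>UNIV. \<Sum>c\<in>UNIV. ginv g x $ b $ c * (pi_form g P b x * pi_form g P c x)) = -1"
proof -
  assume x: "x \<in> U"
  have "(\<Sum>b\<in>UNIV. \<Sum>c\<in>UNIV. ginv g x $ b $ c * (pi_form g P b x * pi_form g P c x))
      = (\<Sum>b\<in>UNIV. pi_form g P b x * (\<Sum>c\<in>UNIV. ginv g x $ b $ c * pi_form g P c x))"
    by (simp add: sum_distrib_left mult_ac)
  also have "\<dots> = (\<Sum>b\<in>UNIV. pi_form g P b x * P x $ b)" by (simp add: H_pi[OF x])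
  also have "\<dots> = -1" by (rule piP[OF x])
  finally show ?thesis .
qed

lemma scal: "x \<in> U \<Longrightarrow> (\<And>b c. S b c x = k * g x $ b $ c + k' * (pi_form g P b x * pi_form g P c x))
   \<Longrightarrow> scalar_of g S x = k * real CARD('n) - k'"
proof -
  assume x: "x \<in> U" and S: "\<And>b c. S b c x = k * g x $ b $ c + k' * (pi_form g P b x * pi_form g P c x)"
  have "scalar_of g S x = k * (\<Sum>b\<in>UNIV. \<Sum>c\<in>UNIV. ginv g x $ b $ c * g x $ b $ c)
     + k' * (\<Sum>b\<in>UNIV. \<Sum>c\<in>UNIV. ginv g x $ b $ c * (pi_form g P b x * pi_form g P c x))"
    unfolding scalar_of_def S by (simp add: algebra_simps sum.distrib sum_distrib_left)
  then show ?thesis by (simp add: trace_g[OF x] trace_pp[OF x])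
qed

end

theorem mainTheorem13:
  fixes U :: "(real^'n::finite) set"
    and g :: "real^'n \<Rightarrow> real^'n^'n"
    and P :: "real^'n \<Rightarrow> real^'n"
  assumes "CARD('n) \<ge> 3"
    and "lorentzian_metric U g"
    and "\<forall>k. smooth_on U (\<lambda>x. P x $ k)"
    and "concircular U g P"
    and "\<forall>x\<in>U. (\<Sum>i\<in>UNIV. \<Sum>j\<in>UNIV. g x $ i $ j * P x $ i * P x $ j) = -1"
  shows "(einstein_type_4 U g P \<longleftrightarrow>
           (perfect_fluid U g P \<and>
            (\<forall>x\<in>U. \<forall>a b. Ricg g a b x =
               (real CARD('n) - 1) * (2 * g x $ a $ b + pi_form g P a x * pi_form g P b x))))
       \<and> (einstein_type_4 U g P \<longrightarrow>
           (\<forall>x\<in>U. rg g x = (real CARD('n) - 1) * (2 * real CARD('n) - 1)))"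
proof -
  interpret L: lset2 U g P
    by unfold_locales (use assms in auto)
  define n where "n = real CARD('n)"
  have n3: "n \<ge> 3" using assms(1) unfolding n_def by simp
  have fwd: "\<forall>x\<in>U. \<forall>a b. Ricg g a b x = (n - 1) * (2 * g x $ a $ b + pi_form g P a x * pi_form g P b x)"
    if E: "einstein_type_4 U g P"
  proof (intro ballI allI)
    fix x a b assume x: "x \<in> U"
    define lam where "lam = r4 g P x / n + (n - 1)"
    have R: "Ricg g b c x = lam * g x $ b $ c + (n - 1) * (pi_form g P b x * pi_form g P c x)" for b c
      using E x L.Ric4_eq[OF x, of b c] unfolding einstein_type_4_def lam_def n_def
      by (simp add: algebra_simps)
    have lam: "lam = 2 * (n - 1)"
    proof -
      have "\<exists>b. pi_form g P b x \<noteq> 0"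
      proof (rule ccontr)
        assume "\<not> (\<exists>b. pi_form g P b x \<noteq> 0)"
        then have "(\<Sum>j\<in>UNIV. pi_form g P j x * P x $ j) = 0" by simp
        then show False using L.piP[OF x] by simp
      qed
      then obtain b where b: "pi_form g P b x \<noteq> 0" by blast
      have h1: "(\<Sum>c\<in>UNIV. Ricg g b c x * P x $ c) = lam * pi_form g P b x - (n - 1) * pi_form g P b x"
        unfolding R by (rule L.contractP[OF x])
      have h2: "(\<Sum>c\<in>UNIV. Ricg g b c x * P x $ c) = (n - 1) * pi_form g P b x"
        using L.Ricg_P[OF x, of b] unfolding n_def .
      have "(n - 1) * pi_form g P b x = lam * pi_form g P b x - (n - 1) * pi_form g P b x"
        using h1 h2 by linarith
      then have "(lam - 2 * (n - 1)) * pi_form g P b x = 0" by (simp add: algebra_simps)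
      with b have "lam - 2 * (n - 1) = 0" by simp
      then show ?thesis by simp
    qed
    show "Ricg g a b x = (n - 1) * (2 * g x $ a $ b + pi_form g P a x * pi_form g P b x)"
      unfolding R lam by (simp add: algebra_simps)
  qed
  have bwd: "einstein_type_4 U g P"
    if R: "\<forall>x\<in>U. \<forall>a b. Ricg g a b x = (n - 1) * (2 * g x $ a $ b + pi_form g P a x * pi_form g P b x)"
    unfolding einstein_type_4_def
  proof (intro ballI allI)
    fix x a b assume x: "x \<in> U"
    have R4: "Ric4 g P b c x = (n - 1) * g x $ b $ c + 0 * (pi_form g P b x * pi_form g P c x)" for b c
      using L.Ric4_eq[OF x, of b c] R x unfolding n_def by (simp add: algebra_simps)
    have r4: "r4 g P x = (n - 1) * n"
      unfolding r4_def using L.scal[OF x, where S = "Ric4 g P" and k = "n - 1" and k' = 0, OF R4] unfolding n_def by simp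
    show "Ric4 g P a b x = r4 g P x / real CARD('n) * g x $ a $ b"
      using R4[of a b] n3 unfolding r4 n_def[symmetric] by simp
  qed
  have pf: "perfect_fluid U g P"
    if R: "\<forall>x\<in>U. \<forall>a b. Ricg g a b x = (n - 1) * (2 * g x $ a $ b + pi_form g P a x * pi_form g P b x)"
    unfolding perfect_fluid_def
    by (rule exI[of _ "\<lambda>x. 2 * (n - 1)"], rule exI[of _ "\<lambda>x. n - 1"]) (use R in \<open>simp add: algebra_simps\<close>)
  have rgv: "\<forall>x\<in>U. rg g x = (n - 1) * (2 * n - 1)"
    if R: "\<forall>x\<in>U. \<forall>a b. Ricg g a b x = (n - 1) * (2 * g x $ a $ b + pi_form g P a x * pi_form g P b x)"
  proof
    fix x assume x: "x \<in> U"
    have "Ricg g b c x = (2 * (n - 1)) * g x $ b $ c + (n - 1) * (pi_form g P b x * pi_form g P c x)" for b c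
      using R x by (simp add: algebra_simps)
    from L.scal[OF x, where S = "Ricg g" and k = "2 * (n - 1)" and k' = "n - 1", OF this] show "rg g x = (n - 1) * (2 * n - 1)"
      unfolding rg_def n_def by (simp add: algebra_simps)
  qed
  show ?thesis
    using fwd bwd pf rgv unfolding n_def by blast
qed

end
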